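(* Let $f$ be a $p$-minimal newform such that $\pi_p$ is a ramified principal series representation, so that $\pi_p\cong\pi(\mu_1,\mu_2)$ with $\mu_1$ unramified and $\omega_p:=\mu_1\mu_2$ of conductor exponent $N_p\ge1$. Then: (i) for $p\ge5$: $a(\mathrm{sym}^3(\pi_p))=3N_p$ if $N_p>1$ or if $N_p=1$ and $\omega_p|_{\mathbb{Z}_p^\times}$ has order $>3$; otherwise $a(\mathrm{sym}^3(\pi_p))=3N_p-1$; (ii) for $p=3$: $a(\mathrm{sym}^3(\pi_3))=2N_3$ if $N_3=2$ and $\omega_3|_{\mathbb{Z}_3^\times}$ has order $3$; otherwise $a(\mathrm{sym}^3(\pi_3))=3N_3-1$; (iii) for $p=2$: $a(\mathrm{sym}^3(\pi_2))=3N_2-1$ if $N_2>3$, and $=2N_2$ otherwise.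
   Context: $f\in S_k(N,\epsilon)$ newform with local component $\pi_p$ at $p$; $N=p^{N_p}N'$, $p\nmid N'$. $p$-minimal: the $p$-part of the level is minimal among all twists of $f$ by Dirichlet characters. The $L$-parameter of $\pi(\mu_1,\mu_2)$ is $\mu_1\oplus\mu_2$ with zero monodromy. $\mathrm{sym}^3(\pi_p)$ is the representation of $\mathrm{GL}_4(\mathbb{Q}_p)$ with $L$-parameter the third symmetric power of that of $\pi_p$; $a(\cdot)$ is the conductor exponent. Conductor exponent of a character $\chi$ of $\mathbb{Q}_p^\times$: $0$ if $\chi|_{\mathbb{Z}_p^\times}=1$, otherwise the least $n\ge1$ with $\chi|_{1+p^n\mathbb{Z}_p}=1$. *)

theory Defs
  imports Complex_Main "HOL-Computational_Algebra.Primes"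
begin

text \<open>Concrete model of the p-adic integers: compatible systems of residues
  x n in [0, p^n) with x (n+1) mod p^n = x n.\<close>
definition zp :: "int \<Rightarrow> (nat \<Rightarrow> int) set" where
  "zp p = {x. \<forall>n. 0 \<le> x n \<and> x n < p ^ n \<and> x (Suc n) mod p ^ n = x n}"

definition zp_mult :: "int \<Rightarrow> (nat \<Rightarrow> int) \<Rightarrow> (nat \<Rightarrow> int) \<Rightarrow> (nat \<Rightarrow> int)" where
  "zp_mult p x y = (\<lambda>n. (x n * y n) mod p ^ n)"

definition zp_units :: "int \<Rightarrow> (nat \<Rightarrow> int) set" where
  "zp_units p = {x \<in> zp p. x 1 \<noteq> 0}"

text \<open>The subgroup 1 + p^n Z_p of Z_p^* (for n = 0 this is all of Z_p^*).\<close>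
definition principal_units :: "int \<Rightarrow> nat \<Rightarrow> (nat \<Rightarrow> int) set" where
  "principal_units p n = {x \<in> zp_units p. x n mod p ^ n = 1 mod p ^ n}"

text \<open>Q_p^* modelled as p^Z x Z_p^*: the pair (k,u) stands for p^k u.\<close>
definition qpx :: "int \<Rightarrow> (int \<times> (nat \<Rightarrow> int)) set" where
  "qpx p = UNIV \<times> zp_units p"

definition qp_mult :: "int \<Rightarrow> int \<times> (nat \<Rightarrow> int) \<Rightarrow> int \<times> (nat \<Rightarrow> int) \<Rightarrow> int \<times> (nat \<Rightarrow> int)" where
  "qp_mult p a b = (fst a + fst b, zp_mult p (snd a) (snd b))"

text \<open>Continuous (quasi-)characters of Q_p^*: homomorphisms into C^* whose
  kernel contains some 1 + p^n Z_p (continuity).\<close>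
definition is_qchar :: "int \<Rightarrow> (int \<times> (nat \<Rightarrow> int) \<Rightarrow> complex) \<Rightarrow> bool" where
  "is_qchar p \<chi> \<longleftrightarrow>
     (\<forall>a\<in>qpx p. \<chi> a \<noteq> 0) \<and>
     (\<forall>a\<in>qpx p. \<forall>b\<in>qpx p. \<chi> (qp_mult p a b) = \<chi> a * \<chi> b) \<and>
     (\<exists>n. \<forall>u\<in>principal_units p n. \<chi> (0, u) = 1)"

definition unramified :: "int \<Rightarrow> (int \<times> (nat \<Rightarrow> int) \<Rightarrow> complex) \<Rightarrow> bool" where
  "unramified p \<chi> \<longleftrightarrow> (\<forall>u\<in>zp_units p. \<chi> (0, u) = 1)"

definition cond_exp :: "int \<Rightarrow> (int \<times> (nat \<Rightarrow> int) \<Rightarrow> complex) \<Rightarrow> nat" where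
  "cond_exp p \<chi> = (if unramified p \<chi> then 0
     else (LEAST n::nat. n \<ge> 1 \<and> (\<forall>u\<in>principal_units p n. \<chi> (0, u) = 1)))"

definition order_on_units :: "int \<Rightarrow> (int \<times> (nat \<Rightarrow> int) \<Rightarrow> complex) \<Rightarrow> nat" where
  "order_on_units p \<chi> = (LEAST k::nat. k \<ge> 1 \<and> (\<forall>u\<in>zp_units p. \<chi> (0, u) ^ k = 1))"

text \<open>Irreducibility of pi(mu1,mu2): mu1/mu2 is not |.|^{+1} or |.|^{-1},
  where |p^k u| = p^(-k).\<close>
definition ps_irreducible :: "int \<Rightarrow> (int \<times> (nat \<Rightarrow> int) \<Rightarrow> complex) \<Rightarrow> (int \<times> (nat \<Rightarrow> int) \<Rightarrow> complex) \<Rightarrow> bool" where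
  "ps_irreducible p \<mu>1 \<mu>2 \<longleftrightarrow>
     \<not> (\<forall>a\<in>qpx p. \<mu>1 a = \<mu>2 a * (of_int p) powi (- fst a)) \<and>
     \<not> (\<forall>a\<in>qpx p. \<mu>1 a = \<mu>2 a * (of_int p) powi (fst a))"

text \<open>Conductor exponent of pi(mu1,mu2): that of its L-parameter mu1 + mu2
  (zero monodromy), i.e. a(mu1) + a(mu2).\<close>
definition ps_conductor :: "int \<Rightarrow> (int \<times> (nat \<Rightarrow> int) \<Rightarrow> complex) \<Rightarrow> (int \<times> (nat \<Rightarrow> int) \<Rightarrow> complex) \<Rightarrow> nat" where
  "ps_conductor p \<mu>1 \<mu>2 = cond_exp p \<mu>1 + cond_exp p \<mu>2"

definition ps_p_minimal :: "int \<Rightarrow> (int \<times> (nat \<Rightarrow> int) \<Rightarrow> complex) \<Rightarrow> (int \<times> (nat \<Rightarrow> int) \<Rightarrow> complex) \<Rightarrow> bool" where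
  "ps_p_minimal p \<mu>1 \<mu>2 \<longleftrightarrow>
     (\<forall>\<chi>. is_qchar p \<chi> \<longrightarrow>
        ps_conductor p \<mu>1 \<mu>2 \<le> ps_conductor p (\<lambda>x. \<mu>1 x * \<chi> x) (\<lambda>x. \<mu>2 x * \<chi> x))"

text \<open>Conductor exponent of sym^3(pi(mu1,mu2)): its L-parameter is the sum of
  the characters mu1^(3-j) mu2^j, j = 0..3, with zero monodromy, so the
  conductor is the sum of their conductor exponents.\<close>
definition sym3_conductor :: "int \<Rightarrow> (int \<times> (nat \<Rightarrow> int) \<Rightarrow> complex) \<Rightarrow> (int \<times> (nat \<Rightarrow> int) \<Rightarrow> complex) \<Rightarrow> nat" where
  "sym3_conductor p \<mu>1 \<mu>2 = (\<Sum>j\<le>3. cond_exp p (\<lambda>x. \<mu>1 x ^ (3 - j) * \<mu>2 x ^ j))"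

end

theory Submission imports Defs "HOL-Number_Theory.Number_Theory" begin

lemma zp_mod:
  assumes "x \<in> zp p" "p > 1" "m \<le> n"
  shows "x n mod p ^ m = x m"
  using assms(3)
proof (induction n)
  case 0
  have "0 \<le> x 0" "x 0 < p ^ 0" using assms(1) unfolding zp_def by blast+
  then show ?case using 0 by simp
next
  case (Suc n)
  show ?case
  proof (cases "m = Suc n")
    case True
    have "0 \<le> x (Suc n)" "x (Suc n) < p ^ Suc n" using assms(1) unfolding zp_def by blast+
    then show ?thesis using True by (simp del: power_Suc)
  next
    case False
    then have "m \<le> n" using Suc.prems by simp
    have d: "p ^ m dvd p ^ n" using \<open>m \<le> n\<close> by (simp add: le_imp_power_dvd)
    have "x (Suc n) mod p ^ m = (x (Suc n) mod p ^ n) mod p ^ m" using d by (simp add: mod_mod_cancel)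
    also have "\<dots> = x n mod p ^ m" using assms(1) by (simp add: zp_def)
    finally show ?thesis using Suc.IH \<open>m \<le> n\<close> by simp
  qed
qed

definition elt :: "int \<Rightarrow> int \<Rightarrow> nat \<Rightarrow> int" where
  "elt p c = (\<lambda>n. c mod p ^ n)"

lemma elt_zp: "p > 1 \<Longrightarrow> elt p c \<in> zp p"
  unfolding zp_def elt_def
  by (auto simp: mod_mod_cancel le_imp_power_dvd)

lemma elt_units: "p > 1 \<Longrightarrow> \<not> p dvd c \<Longrightarrow> elt p c \<in> zp_units p"
  using elt_zp unfolding zp_units_def by (auto simp: elt_def dvd_eq_mod_eq_0)

lemma elt_pu: "p > 1 \<Longrightarrow> \<not> p dvd c \<Longrightarrow> [c = 1] (mod p ^ n) \<Longrightarrow> elt p c \<in> principal_units p n"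
  using elt_units unfolding principal_units_def by (auto simp: elt_def cong_def)

lemma zp_mult_elt: "zp_mult p (elt p a) (elt p b) = elt p (a * b)"
  unfolding zp_mult_def elt_def by (auto simp: mod_mult_eq)

lemma units_mult:
  assumes "prime p" "u \<in> zp_units p" "v \<in> zp_units p"
  shows "zp_mult p u v \<in> zp_units p"
proof -
  have p1: "p > 1" using assms(1) prime_gt_1_int by blast
  have zu: "u \<in> zp p" "v \<in> zp p" using assms by (auto simp: zp_units_def)
  have "zp_mult p u v \<in> zp p"
    unfolding zp_def zp_mult_def
  proof (intro CollectI allI conjI)
    fix n
    show "0 \<le> u n * v n mod p ^ n" using p1 by simp
    show "u n * v n mod p ^ n < p ^ n" using p1 by simp
    have "u (Suc n) * v (Suc n) mod p ^ Suc n mod p ^ n = u (Suc n) * v (Suc n) mod p ^ n"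
      by (simp add: mod_mod_cancel le_imp_power_dvd)
    also have "\<dots> = (u (Suc n) mod p^n) * (v (Suc n) mod p^n) mod p ^ n" by (simp add: mod_mult_eq)
    also have "\<dots> = u n * v n mod p ^ n" using zu by (simp add: zp_def)
    finally show "u (Suc n) * v (Suc n) mod p ^ Suc n mod p ^ n = u n * v n mod p ^ n" .
  qed
  moreover have "u 1 * v 1 mod p \<noteq> 0"
  proof
    assume "u 1 * v 1 mod p = 0"
    then have "p dvd u 1 * v 1" by auto
    then have "p dvd u 1 \<or> p dvd v 1" using assms(1) prime_dvd_mult_iff by blast
    moreover have "0 \<le> u 1" "u 1 < p" "0 \<le> v 1" "v 1 < p" using zu by (auto simp: zp_def dest: spec[of _ 1])
    ultimately show False using assms(2,3) by (auto simp: zp_units_def zdvd_not_zless dest: zdvd_imp_le)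
  qed
  ultimately show ?thesis by (simp add: zp_units_def zp_mult_def)
qed

lemma pu_mono:
  assumes "p > 1" "m \<le> n"
  shows "principal_units p n \<subseteq> principal_units p m"
proof
  fix x assume x: "x \<in> principal_units p n"
  then have xz: "x \<in> zp p" by (simp add: principal_units_def zp_units_def)
  have d: "p ^ m dvd p ^ n" using assms by (simp add: le_imp_power_dvd)
  have "0 \<le> x m" "x m < p ^ m" using xz unfolding zp_def by blast+
  then have "x m mod p ^ m = x n mod p ^ m" using zp_mod[OF xz assms(1,2)] by simp
  also have "\<dots> = (x n mod p ^ n) mod p ^ m" using d by (simp add: mod_mod_cancel)
  also have "\<dots> = (1 mod p ^ n) mod p ^ m" using x by (simp add: principal_units_def)
  also have "\<dots> = 1 mod p ^ m" using d by (simp add: mod_mod_cancel)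
  finally show "x \<in> principal_units p m" using x by (simp add: principal_units_def)
qed

lemma pu_0: "principal_units p 0 = zp_units p"
  by (auto simp: principal_units_def)

lemma cond_exp_char:
  assumes "p > 1"
    and "\<forall>u\<in>principal_units p n. \<chi> (0, u) = 1"
    and "n = 0 \<or> \<not> (\<forall>u\<in>principal_units p (n - 1). \<chi> (0, u) = 1)"
  shows "cond_exp p \<chi> = n"
proof (cases "n = 0")
  case True
  then show ?thesis using assms(2) by (simp add: cond_exp_def unramified_def pu_0)
next
  case False
  then have nu: "\<not> unramified p \<chi>"
    using assms(3) pu_mono[OF assms(1), of 0 "n-1"] by (auto simp: unramified_def pu_0)
  have "(LEAST m::nat. m \<ge> 1 \<and> (\<forall>u\<in>principal_units p m. \<chi> (0, u) = 1)) = n"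
  proof (rule Least_equality)
    show "1 \<le> n \<and> (\<forall>u\<in>principal_units p n. \<chi> (0, u) = 1)" using False assms(2) by simp
    fix m assume m: "1 \<le> m \<and> (\<forall>u\<in>principal_units p m. \<chi> (0, u) = 1)"
    show "n \<le> m"
    proof (rule ccontr)
      assume "\<not> n \<le> m"
      then have "principal_units p (n-1) \<subseteq> principal_units p m" using pu_mono[OF assms(1)] by simp
      then show False using m assms(3) False by blast
    qed
  qed
  then show ?thesis using nu by (simp add: cond_exp_def)
qed

lemma pow_cong_lemma:
  fixes a q :: int
  shows "[(1 + a*q)^k = 1 + int k*a*q] (mod q^2)"
proof (induction k)
  case 0 then show ?case by simp
next
  case (Suc k)
  have "[(1 + a*q)^Suc k = (1 + int k*a*q) * (1 + a*q)] (mod q^2)"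
    using cong_mult[OF Suc.IH cong_refl[of "1 + a*q"]] by (simp add: mult.commute)
  moreover have "(1 + int k*a*q) * (1 + a*q) = 1 + int (Suc k)*a*q + (int k * a * a) * q^2"
    by (simp add: algebra_simps power2_eq_square)
  moreover have "[1 + int (Suc k)*a*q + (int k * a * a) * q^2 = 1 + int (Suc k)*a*q] (mod q^2)"
    by (simp add: cong_def)
  ultimately show ?case by (metis cong_trans)
qed


lemma z_pow_mod: "(z::complex)^b = 1 \<Longrightarrow> z^a = z^(a mod b)"
proof -
  assume h: "z^b = 1"
  have "z^a = z^(b*(a div b) + a mod b)" by simp
  also have "\<dots> = (z^b)^(a div b) * z^(a mod b)" by (metis power_add power_mult)
  finally show ?thesis using h by simp
qed

locale ctx =
  fixes p :: int and N :: nat and f :: "(nat \<Rightarrow> int) \<Rightarrow> complex"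
  assumes prime: "prime p"
    and fmult: "\<And>u v. u \<in> zp_units p \<Longrightarrow> v \<in> zp_units p \<Longrightarrow> f (zp_mult p u v) = f u * f v"
    and fnz: "\<And>u. u \<in> zp_units p \<Longrightarrow> f u \<noteq> 0"
    and ftriv: "\<And>u. u \<in> principal_units p N \<Longrightarrow> f u = 1"
    and fnontriv: "\<exists>u\<in>principal_units p (N - 1). f u \<noteq> 1"
    and N1: "N \<ge> 1"
begin

definition F :: "int \<Rightarrow> complex" where "F c = f (elt p c)"

definition T :: "nat \<Rightarrow> nat \<Rightarrow> bool" where
  "T j n \<longleftrightarrow> (\<forall>c. \<not> p dvd c \<longrightarrow> [c = 1] (mod p ^ n) \<longrightarrow> F c ^ j = 1)"

lemma p1: "p > 1" using prime prime_gt_1_int by blast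

lemma ndvd_mult: "\<not> p dvd a \<Longrightarrow> \<not> p dvd b \<Longrightarrow> \<not> p dvd a * b"
  using prime prime_dvd_mult_iff by blast

lemma ndvd_pow: "\<not> p dvd a \<Longrightarrow> \<not> p dvd a ^ k"
  using prime prime_dvd_power_iff by (metis prime_dvd_power)

lemma F_mult: "\<not> p dvd a \<Longrightarrow> \<not> p dvd b \<Longrightarrow> F (a * b) = F a * F b"
  unfolding F_def using fmult[OF elt_units[OF p1] elt_units[OF p1]] zp_mult_elt by metis

lemma F_nz: "\<not> p dvd a \<Longrightarrow> F a \<noteq> 0"
  unfolding F_def using fnz elt_units[OF p1] by blast

lemma F_1: "F 1 = 1"
proof -
  have nd: "\<not> p dvd 1" using p1 by (simp add: zdvd_not_zless)
  have "F 1 = F 1 * F 1" using F_mult[OF nd nd] by simp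
  then show ?thesis using F_nz[OF nd] by simp
qed

lemma F_pow: "\<not> p dvd c \<Longrightarrow> F (c ^ k) = F c ^ k"
proof (induction k)
  case 0 then show ?case by (simp add: F_1)
next
  case (Suc k)
  then show ?case using F_mult[OF Suc.prems ndvd_pow[OF Suc.prems, of k]] by (simp add: mult.commute)
qed

lemma F_triv: "\<not> p dvd c \<Longrightarrow> [c = 1] (mod p ^ N) \<Longrightarrow> F c = 1"
  unfolding F_def using ftriv elt_pu[OF p1] by blast

definition tt :: nat where "tt = totient (nat (p ^ N))"

lemma tt_pos: "tt > 0"
  using p1 by (simp add: tt_def)

lemma euler: "\<not> p dvd c \<Longrightarrow> [c ^ tt = 1] (mod p ^ N)"
proof -
  assume h: "\<not> p dvd c"
  have "p ^ N > 1" using p1 N1 by simp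
  then interpret residues "p ^ N" "residue_ring (p ^ N)" by (unfold_locales) simp
  have "coprime p c" using h prime by (simp add: prime_imp_coprime)
  then have "coprime c (p ^ N)" by (simp add: coprime_commute)
  then show ?thesis using euler_theorem unfolding tt_def by blast
qed

lemma F_cong:
  assumes "\<not> p dvd a" "\<not> p dvd b" "[a = b] (mod p ^ N)"
  shows "F a = F b"
proof -
  have "[a * b ^ (tt - 1) = b * b ^ (tt - 1)] (mod p ^ N)" using assms(3) by (intro cong_mult) auto
  moreover have "b * b ^ (tt - 1) = b ^ tt" using tt_pos by (metis Suc_diff_1 power_Suc)
  ultimately have "[a * b ^ (tt - 1) = 1] (mod p ^ N)" using euler[OF assms(2)] by (metis cong_trans)
  then have "F (a * b ^ (tt - 1)) = 1" using F_triv ndvd_mult[OF assms(1) ndvd_pow[OF assms(2)]] by blast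
  then have e1: "F a * F b ^ (tt - 1) = 1" using F_mult[OF assms(1) ndvd_pow[OF assms(2)]] F_pow[OF assms(2)] by simp
  have e2: "F b ^ tt = 1" using F_triv[OF ndvd_pow[OF assms(2)] euler[OF assms(2)]] F_pow[OF assms(2)] by simp
  have "F b ^ tt = F b * F b ^ (tt - 1)" using tt_pos by (metis Suc_diff_1 power_Suc)
  then have "F a * F b ^ tt = F b" using e1 by (simp add: algebra_simps)
  then show ?thesis using e2 by simp
qed

lemma unit_N_ndvd:
  assumes "u \<in> zp_units p" shows "\<not> p dvd u N"
proof
  assume "p dvd u N"
  have uz: "u \<in> zp p" using assms by (simp add: zp_units_def)
  have "u N mod p ^ 1 = u 1" using zp_mod[OF uz p1 N1] .
  then have "u 1 = 0" using \<open>p dvd u N\<close> by simp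
  then show False using assms by (simp add: zp_units_def)
qed

lemma f_F:
  assumes u: "u \<in> zp_units p" shows "f u = F (u N)"
proof -
  define b where "b = u N"
  have nb: "\<not> p dvd b" using unit_N_ndvd[OF u] by (simp add: b_def)
  have eu: "elt p (b ^ (tt - 1)) \<in> zp_units p" using elt_units[OF p1 ndvd_pow[OF nb]] .
  have prod: "zp_mult p u (elt p (b ^ (tt - 1))) \<in> zp_units p" using units_mult[OF prime u eu] .
  have "zp_mult p u (elt p (b ^ (tt - 1))) N = (b * (b ^ (tt - 1) mod p ^ N)) mod p ^ N"
    by (simp add: zp_mult_def elt_def b_def)
  also have "\<dots> = (b * b ^ (tt - 1)) mod p ^ N" by (simp add: mod_mult_right_eq)
  also have "b * b ^ (tt - 1) = b ^ tt" using tt_pos by (metis Suc_diff_1 power_Suc)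
  also have "b ^ tt mod p ^ N = 1 mod p ^ N" using euler[OF nb] by (simp add: cong_def)
  finally have "zp_mult p u (elt p (b ^ (tt - 1))) \<in> principal_units p N"
    using prod by (simp add: principal_units_def)
  then have "f u * F (b ^ (tt - 1)) = 1" using ftriv fmult[OF u eu] unfolding F_def by simp
  then have e1: "f u * F b ^ (tt - 1) = 1" using F_pow[OF nb] by simp
  have e2: "F b ^ tt = 1" using F_triv[OF ndvd_pow[OF nb] euler[OF nb]] F_pow[OF nb] by simp
  have "F b ^ tt = F b * F b ^ (tt - 1)" using tt_pos by (metis Suc_diff_1 power_Suc)
  then have "f u * F b ^ tt = F b" using e1 by (simp add: algebra_simps)
  then show ?thesis using e2 b_def by simp
qed

lemma level_iff:
  assumes "n \<le> N"
  shows "(\<forall>u\<in>principal_units p n. f u ^ j = 1) \<longleftrightarrow> T j n"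
proof
  assume h: "\<forall>u\<in>principal_units p n. f u ^ j = 1"
  show "T j n" unfolding T_def
  proof (intro allI impI)
    fix c assume "\<not> p dvd c" "[c = 1] (mod p ^ n)"
    then have "elt p c \<in> principal_units p n" using elt_pu[OF p1] by blast
    then show "F c ^ j = 1" using h unfolding F_def by blast
  qed
next
  assume h: "T j n"
  show "\<forall>u\<in>principal_units p n. f u ^ j = 1"
  proof
    fix u assume u: "u \<in> principal_units p n"
    then have uu: "u \<in> zp_units p" and uz: "u \<in> zp p" by (auto simp: principal_units_def zp_units_def)
    have "u N mod p ^ n = u n" using zp_mod[OF uz p1 assms] .
    moreover have "0 \<le> u n" "u n < p ^ n" using uz unfolding zp_def by blast+
    ultimately have "u N mod p ^ n = 1 mod p ^ n" using u by (simp add: principal_units_def)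
    then have "[u N = 1] (mod p ^ n)" by (simp add: cong_def)
    then have "F (u N) ^ j = 1" using h unit_N_ndvd[OF uu] unfolding T_def by blast
    then show "f u ^ j = 1" using f_F[OF uu] by simp
  qed
qed

lemma T_mono: "m \<le> n \<Longrightarrow> T j m \<Longrightarrow> T j n"
  unfolding T_def
  by (meson cong_dvd_modulus le_imp_power_dvd)

lemma T_N: "T j N"
  unfolding T_def using F_triv by simp

lemma T_0: "T 0 n" by (simp add: T_def)

lemma not_T1: "\<not> T 1 (N - 1)"
  using fnontriv level_iff[of "N - 1" 1] by auto

lemma T_add: "T j n \<Longrightarrow> T k n \<Longrightarrow> T (j + k) n"
  unfolding T_def by (simp add: power_add)

lemma T_sub: "T (j + k) n \<Longrightarrow> T k n \<Longrightarrow> T j n"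
  unfolding T_def by (auto simp: power_add)

lemma T_tt: "T tt 0"
  unfolding T_def using F_triv ndvd_pow euler F_pow by metis

lemma cond_of:
  assumes "\<forall>u\<in>zp_units p. \<chi> (0, u) = f u ^ j" "n \<le> N" "T j n" "n = 0 \<or> \<not> T j (n - 1)"
  shows "cond_exp p \<chi> = n"
proof (rule cond_exp_char[OF p1])
  have sub: "\<And>m. principal_units p m \<subseteq> zp_units p" by (auto simp: principal_units_def)
  have "\<forall>u\<in>principal_units p n. f u ^ j = 1" using level_iff[OF assms(2)] assms(3) by blast
  then show "\<forall>u\<in>principal_units p n. \<chi> (0, u) = 1"
    using assms(1) sub by fastforce
  show "n = 0 \<or> \<not> (\<forall>u\<in>principal_units p (n - 1). \<chi> (0, u) = 1)"
  proof (cases "n = 0")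
    case False
    then have "\<not> T j (n - 1)" using assms(4) by simp
    then obtain u where u: "u \<in> principal_units p (n - 1)" "f u ^ j \<noteq> 1"
    proof -
      have "n - 1 \<le> N" using assms(2) by simp
      then show ?thesis using level_iff[of "n - 1" j] \<open>\<not> T j (n - 1)\<close> that by blast
    qed
    then have "\<chi> (0, u) \<noteq> 1" using assms(1) sub by fastforce
    then show ?thesis using u by blast
  qed simp
qed

lemma pth:
  assumes "m \<ge> 1" "[c = 1] (mod p ^ m)" "p dvd int k"
  shows "[c ^ k = 1] (mod p ^ (m + 1))"
proof -
  obtain a where a: "c = 1 + a * p ^ m"
    using assms(2) by (metis cong_iff_lin cong_sym mult.commute)
  have "[c ^ k = 1 + int k * a * p ^ m] (mod (p ^ m)^2)" using pow_cong_lemma a by simp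
  moreover have "p ^ (m + 1) dvd (p ^ m)^2" using assms(1)
    by (metis le_imp_power_dvd power_mult[symmetric] mult_2_right add_le_mono le_refl mult.commute)
  ultimately have "[c ^ k = 1 + int k * a * p ^ m] (mod p ^ (m + 1))" using cong_dvd_modulus by blast
  moreover have "[1 + int k * a * p ^ m = 1] (mod p ^ (m + 1))"
  proof -
    obtain r where "int k = p * r" using assms(3) by blast
    then have "int k * a * p ^ m = p ^ (m + 1) * (r * a)" by (simp add: algebra_simps)
    then have "1 + int k * a * p ^ m = 1 + p ^ (m + 1) * (r * a)" by simp
    moreover have "[1 = 1 + p ^ (m + 1) * (r * a)] (mod p ^ (m + 1))"
      unfolding cong_iff_lin by blast
    ultimately show ?thesis by (metis cong_sym)
  qed
  ultimately show ?thesis by (metis cong_trans)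
qed

end

context ctx begin

lemma ndvd_1q: "m \<ge> 1 \<Longrightarrow> \<not> p dvd (1 + p ^ m * a)"
proof
  assume "m \<ge> 1" "p dvd 1 + p ^ m * a"
  moreover have "p dvd p ^ m * a" using \<open>m \<ge> 1\<close> by (simp add: dvd_power)
  ultimately have "p dvd 1" by (metis dvd_add_right_iff add.commute)
  then show False using p1 by (simp add: zdvd_not_zless)
qed

lemma gen:
  assumes N2: "N \<ge> 2" and w1: "F (1 + p ^ (N - 1)) = 1"
  shows "T 1 (N - 1)"
  unfolding T_def
proof (intro allI impI)
  fix c assume nc: "\<not> p dvd c" and cc: "[c = 1] (mod p ^ (N - 1))"
  define q where "q = p ^ (N - 1)"
  obtain a where a: "c = 1 + a * q"
    using cc unfolding q_def by (metis cong_iff_lin cong_sym mult.commute)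
  define k where "k = nat (a mod p)"
  have ik: "int k = a mod p" using p1 by (simp add: k_def)
  have pNq: "p ^ N = p * q" using N2 by (simp add: q_def power_Suc[symmetric] del: power_Suc)
  have "[(1 + 1 * q) ^ k = 1 + int k * 1 * q] (mod q^2)" by (rule pow_cong_lemma)
  moreover have "p ^ N dvd q^2"
  proof -
    have "q^2 = p ^ (2 * (N - 1))" by (simp add: q_def power_mult[symmetric] mult.commute)
    moreover have "N \<le> 2 * (N - 1)" using N2 by simp
    ultimately show ?thesis by (simp add: le_imp_power_dvd)
  qed
  ultimately have c1: "[(1 + q) ^ k = 1 + int k * q] (mod p ^ N)" using cong_dvd_modulus by fastforce
  have "a * q - int k * q = p ^ N * (a div p)"
  proof -
    have "a = a mod p + p * (a div p)" by simp
    then have "a * q = (a mod p) * q + p * q * (a div p)" by (metis distrib_right mult.assoc mult.commute)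
    then show ?thesis using ik pNq by simp
  qed
  then have "[1 + int k * q = c] (mod p ^ N)"
    unfolding a cong_iff_lin by (intro exI[of _ "a div p"]) (simp add: algebra_simps)
  then have cw: "[(1 + q) ^ k = c] (mod p ^ N)" using c1 by (metis cong_trans)
  have nw: "\<not> p dvd (1 + q)" using ndvd_1q[of "N - 1" 1] N2 by (simp add: q_def)
  have "F c = F ((1 + q) ^ k)" using F_cong[OF nc ndvd_pow[OF nw] cong_sym[OF cw]] .
  also have "\<dots> = F (1 + q) ^ k" using F_pow[OF nw] .
  finally show "F c ^ 1 = 1" using w1 by (simp add: q_def)
qed

lemma not_T_w:
  assumes "N \<ge> 2" shows "F (1 + p ^ (N - 1)) \<noteq> 1"
  using gen[OF assms] not_T1 by blast

lemma c0: obtains c where "\<not> p dvd c" "[c = 1] (mod p ^ (N - 1))" "F c \<noteq> 1"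
  using not_T1 unfolding T_def by auto

lemma T_pth:
  assumes "N \<ge> 2" "p dvd int k" shows "T k (N - 1)"
  unfolding T_def
proof (intro allI impI)
  fix c assume "\<not> p dvd c" "[c = 1] (mod p ^ (N - 1))"
  moreover have "N - 1 \<ge> 1" "N - 1 + 1 = N" using assms by auto
  ultimately have "[c ^ k = 1] (mod p ^ (N - 1 + 1))" using pth assms(2) by blast
  then have "[c ^ k = 1] (mod p ^ N)" using \<open>N - 1 + 1 = N\<close> by simp
  then have "F (c ^ k) = 1" using F_triv ndvd_pow[OF \<open>\<not> p dvd c\<close>] by blast
  then show "F c ^ k = 1" using F_pow[OF \<open>\<not> p dvd c\<close>] by simp
qed

end

lemma cube_id: fixes y :: int shows "(1 + 3*y)^3 = (1 + 9*y) + 27*y*(y + y^2)"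
  by (simp add: power2_eq_square power3_eq_cube algebra_simps)

lemma sq_id: fixes y :: int shows "(1 + 4*y)^2 = (1 + 8*y) + 16*y*y"
  by (simp add: power2_eq_square algebra_simps)

lemma sq_mod8: fixes c :: int assumes "\<not> 2 dvd c" shows "[c^2 = 1] (mod 8)"
proof -
  have r: "0 \<le> c mod 8" "c mod 8 < 8" by auto
  have "(c mod 8) mod 2 = c mod 2" by (simp add: mod_mod_cancel)
  then have o: "(c mod 8) mod 2 = 1" using assms by (simp add: odd_iff_mod_2_eq_one)
  have "\<And>x::int. 0 \<le> x \<Longrightarrow> x < 8 \<Longrightarrow> x \<in> {0,1,2,3,4,5,6,7}" by auto
  then have "c mod 8 \<in> {0,1,2,3,4,5,6,7}" using r by blast
  then have "c mod 8 \<in> {1,3,5,7}" using o by auto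
  moreover have "c^2 mod 8 = (c mod 8)^2 mod 8" by (simp add: power_mod)
  ultimately show ?thesis unfolding cong_def by auto
qed

lemma sq_mod3: fixes c :: int assumes "\<not> 3 dvd c" shows "[c^2 = 1] (mod 3)"
proof -
  have "c mod 3 \<noteq> 0" using assms by auto
  then have "c mod 3 \<in> {1,2}" using pos_mod_bound[of 3 c] pos_mod_sign[of 3 c] by auto
  moreover have "c^2 mod 3 = (c mod 3)^2 mod 3" by (simp add: power_mod)
  ultimately show ?thesis unfolding cong_def by auto
qed

context ctx begin

lemma not_T_by: "\<not> p dvd v \<Longrightarrow> [v = 1] (mod p ^ m) \<Longrightarrow> F v ^ j \<noteq> 1 \<Longrightarrow> \<not> T j m"
  unfolding T_def by blast

lemma T_123: "T 1 n" if "T 2 n" "T 3 n"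
proof -
  have "(1::nat) + 2 = 3" by simp
  then show ?thesis using T_sub[of 1 2 n] that by metis
qed

lemma main:
  fixes \<chi> :: "nat \<Rightarrow> int \<times> (nat \<Rightarrow> int) \<Rightarrow> complex"
  assumes h\<chi>: "\<And>j. \<forall>u\<in>zp_units p. \<chi> j (0, u) = f u ^ j"
  defines "S \<equiv> \<Sum>j\<le>3. cond_exp p (\<chi> j)"
    and "od \<equiv> LEAST k. k \<ge> 1 \<and> T k 0"
  shows "(p \<ge> 5 \<longrightarrow> S = (if N > 1 \<or> (N = 1 \<and> od > 3) then 3 * N else 3 * N - 1))
       \<and> (p = 3 \<longrightarrow> S = (if N = 2 \<and> od = 3 then 2 * N else 3 * N - 1))
       \<and> (p = 2 \<longrightarrow> S = (if N > 3 then 3 * N - 1 else 2 * N))"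
proof -
  have cond: "cond_exp p (\<chi> j) = n" if "n \<le> N" "T j n" "n = 0 \<or> \<not> T j (n - 1)" for j n
    using cond_of[OF h\<chi>[of j] that] .
  have e0: "cond_exp p (\<chi> 0) = 0" using cond[of 0 0] T_0 by simp
  have e1: "cond_exp p (\<chi> 1) = N" using cond[of N 1] T_N not_T1 by simp
  have S: "S = N + cond_exp p (\<chi> 2) + cond_exp p (\<chi> 3)"
    using e0 e1 by (simp add: S_def eval_nat_numeral)
  have odex: "tt \<ge> 1 \<and> T tt 0" using tt_pos T_tt by simp
  have odI: "od \<ge> 1 \<and> T od 0" unfolding od_def by (rule LeastI[of _ tt], rule odex)
  have odle: "od \<le> k" if "k \<ge> 1" "T k 0" for k unfolding od_def by (rule Least_le) (use that in simp)
  obtain c0 where c0: "\<not> p dvd c0" "[c0 = 1] (mod p ^ (N - 1))" "F c0 \<noteq> 1" using c0 by blast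
  have N1cond: "cond_exp p (\<chi> j) = (if T j 0 then 0 else 1)" if "N = 1" for j
  proof (cases "T j 0")
    case True then show ?thesis using cond[of 0 j] by simp
  next
    case False then show ?thesis using cond[of 1 j] T_N \<open>N = 1\<close> by simp
  qed
  have p5: "p \<ge> 5 \<longrightarrow> S = (if N > 1 \<or> (N = 1 \<and> od > 3) then 3 * N else 3 * N - 1)"
  proof
    assume p5: "p \<ge> 5"
    have pr2: "prime (2::int)" by simp
    have n2: "\<not> 2 dvd p" using primes_dvd_imp_eq[OF pr2 prime] p5 by auto
    have pr3: "prime (3::int)" by simp
    have n3: "\<not> 3 dvd p" using primes_dvd_imp_eq[OF pr3 prime] p5 by auto
    show "S = (if N > 1 \<or> (N = 1 \<and> od > 3) then 3 * N else 3 * N - 1)"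
    proof (cases "N \<ge> 2")
      case True
      define z where "z = F c0"
      have "T (nat p) (N - 1)" using T_pth[OF True] p5 by simp
      then have zp: "z ^ nat p = 1" using c0 unfolding T_def z_def by blast
      have "p mod 2 = 1" using n2 by presburger
      moreover have "nat (p mod 2) = nat p mod nat 2" using p5 by (simp add: nat_mod_distrib)
      ultimately have "nat p mod 2 = 1" by simp
      then have "z ^ 2 \<noteq> 1" using z_pow_mod[of z 2 "nat p"] zp c0(3) z_def by auto
      then have t2: "\<not> T 2 (N - 1)" using not_T_by[OF c0(1,2)] z_def by blast
      have "p mod 3 = 1 \<or> p mod 3 = 2" using n3 by presburger
      moreover have "nat (p mod 3) = nat p mod nat 3" using p5 by (simp add: nat_mod_distrib)
      ultimately have "nat p mod 3 = 1 \<or> nat p mod 3 = 2" by auto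
      moreover have "z ^ 3 = 1 \<Longrightarrow> z ^ 2 = 1 \<Longrightarrow> z = 1" by (metis power3_eq_cube power2_eq_square mult_1_right mult.assoc)
      ultimately have "z ^ 3 \<noteq> 1" using z_pow_mod[of z 3 "nat p"] zp c0(3) z_def by auto
      then have t3: "\<not> T 3 (N - 1)" using not_T_by[OF c0(1,2)] z_def by blast
      have "cond_exp p (\<chi> 2) = N" "cond_exp p (\<chi> 3) = N"
        using cond[of N 2] cond[of N 3] T_N t2 t3 by auto
      then show ?thesis using S True by simp
    next
      case False
      then have N1: "N = 1" using N1 by simp
      have nT1: "\<not> T 1 0" using not_T1 N1 by simp
      show ?thesis
      proof (cases "T 2 0")
        case True
        then have "\<not> T 3 0" using T_123 nT1 by blast
        moreover have "od \<le> 2" using odle[of 2] True by simp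
        ultimately show ?thesis using S N1cond[OF N1] True N1 by simp
      next
        case F2: False
        show ?thesis
        proof (cases "T 3 0")
          case True
          moreover have "od \<le> 3" using odle[of 3] True by simp
          ultimately show ?thesis using S N1cond[OF N1] F2 N1 by simp
        next
          case False
          have "od \<noteq> 1" "od \<noteq> 2" "od \<noteq> 3" using odI nT1 F2 False by auto
          then have "od > 3" using odI by linarith
          then show ?thesis using S N1cond[OF N1] F2 False N1 by simp
        qed
      qed
    qed
  qed
  have p3: "p = 3 \<longrightarrow> S = (if N = 2 \<and> od = 3 then 2 * N else 3 * N - 1)"
  proof
    assume p3: "p = 3"
    show "S = (if N = 2 \<and> od = 3 then 2 * N else 3 * N - 1)"
    proof (cases "N = 1")
      case True
      have T2: "T 2 0" unfolding T_def
      proof (intro allI impI)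
        fix c assume "\<not> p dvd c"
        then have "[c^2 = 1] (mod p ^ N)" using sq_mod3 p3 True by simp
        then have "F (c^2) = 1" using F_triv ndvd_pow[OF \<open>\<not> p dvd c\<close>] by blast
        then show "F c ^ 2 = 1" using F_pow[OF \<open>\<not> p dvd c\<close>] by simp
      qed
      have "\<not> T 3 0" using T_123 T2 not_T1 True by auto
      then show ?thesis using S N1cond[OF True] T2 True by simp
    next
      case False
      then have N2: "N \<ge> 2" using N1 by simp
      define z where "z = F c0"
      have T3: "T 3 (N - 1)" using T_pth[OF N2] p3 by simp
      then have z3: "z ^ 3 = 1" using c0 unfolding T_def z_def by blast
      have "z ^ 2 \<noteq> 1" using z3 c0(3) z_def by (metis power3_eq_cube power2_eq_square mult_1_right mult.assoc)
      then have t2: "\<not> T 2 (N - 1)" using not_T_by[OF c0(1,2)] z_def by blast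
      have e2: "cond_exp p (\<chi> 2) = N" using cond[of N 2] T_N t2 by auto
      show ?thesis
      proof (cases "N = 2")
        case True
        show ?thesis
        proof (cases "T 3 0")
          case T30: True
          have "od = 3" unfolding od_def
          proof (rule Least_equality)
            show "1 \<le> (3::nat) \<and> T 3 0" using T30 by simp
            fix k assume k: "1 \<le> k \<and> T k 0"
            show "3 \<le> k"
            proof (rule ccontr)
              assume "\<not> 3 \<le> k"
              then have "k = 1 \<or> k = 2" using k by auto
              then show False using k T_mono[of 0 "N - 1"] not_T1 t2 by auto
            qed
          qed
          moreover have "cond_exp p (\<chi> 3) = 0" using cond[of 0 3] T30 by simp
          ultimately show ?thesis using S e2 True by simp
        next
          case False
          then have "od \<noteq> 3" using odI by auto
          moreover have "cond_exp p (\<chi> 3) = 1" using cond[of 1 3] False T3 True by simp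
          ultimately show ?thesis using S e2 True by simp
        qed
      next
        case False
        then have N3: "N \<ge> 3" using N2 by simp
        then obtain k where k: "N = k + 3" by (metis add.commute le_iff_add)
        define y :: int where "y = 3 ^ k"
        define v where "v = 1 + 3 * y"
        have pN2: "p ^ (N - 2) = 3 * y" using p3 k by (simp add: y_def)
        have pN1: "p ^ (N - 1) = 9 * y" using p3 k by (simp add: y_def eval_nat_numeral)
        have pN: "p ^ N = 27 * y" using p3 k by (simp add: y_def eval_nat_numeral)
        have nv: "\<not> p dvd v" using ndvd_1q[of 1 y] p3 by (simp add: v_def)
        have vc: "[v = 1] (mod p ^ (N - 2))" unfolding pN2 v_def cong_iff_lin
          by (intro exI[of _ "-1"]) simp
        have "[v ^ 3 = 1 + p ^ (N - 1)] (mod p ^ N)"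
          unfolding pN pN1 v_def cube_id cong_iff_lin by (intro exI[of _ "-(y + y^2)"]) (simp add: algebra_simps)
        then have "F (v ^ 3) = F (1 + p ^ (N - 1))"
          using F_cong ndvd_pow[OF nv] ndvd_1q[of "N - 1" 1] N2 by simp
        then have "F v ^ 3 \<noteq> 1" using F_pow[OF nv] not_T_w[OF N2] by simp
        then have t3: "\<not> T 3 (N - 2)" using not_T_by[OF nv vc] by blast
        have "N - 1 - 1 = N - 2" by simp
        then have "cond_exp p (\<chi> 3) = N - 1" using cond[of "N - 1" 3] T3 t3 by simp
        then show ?thesis using S e2 False N3 by simp
      qed
    qed
  qed
  have p2: "p = 2 \<longrightarrow> S = (if N > 3 then 3 * N - 1 else 2 * N)"
  proof
    assume p2: "p = 2"
    have N2: "N \<ge> 2"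
    proof (rule ccontr)
      assume "\<not> N \<ge> 2"
      then have "N = 1" using N1 by simp
      have "T 1 0" unfolding T_def
      proof (intro allI impI)
        fix c assume "\<not> p dvd c"
        then have "[c = 1] (mod p ^ N)" using p2 \<open>N = 1\<close> by (simp add: cong_def odd_iff_mod_2_eq_one)
        then show "F c ^ 1 = 1" using F_triv \<open>\<not> p dvd c\<close> by simp
      qed
      then show False using not_T1 \<open>N = 1\<close> by simp
    qed
    show "S = (if N > 3 then 3 * N - 1 else 2 * N)"
    proof (cases "N \<le> 3")
      case True
      have T2: "T 2 0" unfolding T_def
      proof (intro allI impI)
        fix c assume "\<not> p dvd c"
        then have "[c^2 = 1] (mod 8)" using sq_mod8 p2 by simp
        moreover have "p ^ N dvd 8" using True p2 le_imp_power_dvd[of N 3 "2::int"] by simp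
        ultimately have "[c^2 = 1] (mod p ^ N)" using cong_dvd_modulus by blast
        then have "F (c^2) = 1" using F_triv ndvd_pow[OF \<open>\<not> p dvd c\<close>] by blast
        then show "F c ^ 2 = 1" using F_pow[OF \<open>\<not> p dvd c\<close>] by simp
      qed
      have "\<not> T 3 (N - 1)" using T_123 T_mono[OF _ T2, of "N - 1"] not_T1 by auto
      then have "cond_exp p (\<chi> 3) = N" using cond[of N 3] T_N by simp
      moreover have "cond_exp p (\<chi> 2) = 0" using cond[of 0 2] T2 by simp
      ultimately show ?thesis using S True by simp
    next
      case False
      then have "N \<ge> 4" by simp
      then obtain k where k: "N = k + 4" by (metis add.commute le_iff_add)
      define y :: int where "y = 2 ^ k"
      define v where "v = 1 + 4 * y"
      have pN2: "p ^ (N - 2) = 4 * y" using p2 k by (simp add: y_def eval_nat_numeral)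
      have pN1: "p ^ (N - 1) = 8 * y" using p2 k by (simp add: y_def eval_nat_numeral)
      have pN: "p ^ N = 16 * y" using p2 k by (simp add: y_def eval_nat_numeral)
      have nv: "\<not> p dvd v" using ndvd_1q[of 2 y] p2 by (simp add: v_def)
      have vc: "[v = 1] (mod p ^ (N - 2))" unfolding pN2 v_def cong_iff_lin
        by (intro exI[of _ "-1"]) simp
      have "[v ^ 2 = 1 + p ^ (N - 1)] (mod p ^ N)"
        unfolding pN pN1 v_def sq_id cong_iff_lin by (intro exI[of _ "-y"]) (simp add: algebra_simps)
      then have "F (v ^ 2) = F (1 + p ^ (N - 1))"
        using F_cong ndvd_pow[OF nv] ndvd_1q[of "N - 1" 1] N2 by simp
      then have "F v ^ 2 \<noteq> 1" using F_pow[OF nv] not_T_w[OF N2] by simp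
      then have t2: "\<not> T 2 (N - 2)" using not_T_by[OF nv vc] by blast
      have T2: "T 2 (N - 1)" using T_pth[OF N2] p2 by simp
      have "N - 1 - 1 = N - 2" by simp
      then have "cond_exp p (\<chi> 2) = N - 1" using cond[of "N - 1" 2] T2 t2 by simp
      moreover have "\<not> T 3 (N - 1)" using T_123 T2 not_T1 by auto
      then have "cond_exp p (\<chi> 3) = N" using cond[of N 3] T_N by simp
      ultimately show ?thesis using S k by simp
    qed
  qed
  show ?thesis using p5 p3 p2 by blast
qed

end

theorem mainTheorem7:
  fixes p :: int and N :: nat
    and \<mu>1 \<mu>2 :: "int \<times> (nat \<Rightarrow> int) \<Rightarrow> complex"
  assumes "prime p"
    and "is_qchar p \<mu>1" and "is_qchar p \<mu>2"
    and "ps_irreducible p \<mu>1 \<mu>2"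
    and "ps_p_minimal p \<mu>1 \<mu>2"
    and "unramified p \<mu>1"
    and "ps_conductor p \<mu>1 \<mu>2 = N"
    and "cond_exp p (\<lambda>x. \<mu>1 x * \<mu>2 x) = N"
    and "N \<ge> 1"
  shows "(p \<ge> 5 \<longrightarrow>
            sym3_conductor p \<mu>1 \<mu>2 =
              (if N > 1 \<or> (N = 1 \<and> order_on_units p (\<lambda>x. \<mu>1 x * \<mu>2 x) > 3)
               then 3 * N else 3 * N - 1))
       \<and> (p = 3 \<longrightarrow>
            sym3_conductor p \<mu>1 \<mu>2 =
              (if N = 2 \<and> order_on_units p (\<lambda>x. \<mu>1 x * \<mu>2 x) = 3
               then 2 * N else 3 * N - 1))
       \<and> (p = 2 \<longrightarrow>
            sym3_conductor p \<mu>1 \<mu>2 = (if N > 3 then 3 * N - 1 else 2 * N))"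
proof -
  define f where "f = (\<lambda>u. \<mu>2 (0, u))"
  define \<omega> where "\<omega> = (\<lambda>x. \<mu>1 x * \<mu>2 x)"
  have p1: "p > 1" using assms(1) prime_gt_1_int by blast
  have om: "\<omega> (0, u) = f u" if "u \<in> zp_units p" for u
    using assms(6) that by (simp add: \<omega>_def f_def unramified_def)
  have inq: "(0, u) \<in> qpx p" if "u \<in> zp_units p" for u using that by (simp add: qpx_def)
  have q1: "\<forall>a\<in>qpx p. \<mu>2 a \<noteq> 0" and q2: "\<forall>a\<in>qpx p. \<forall>b\<in>qpx p. \<mu>2 (qp_mult p a b) = \<mu>2 a * \<mu>2 b"
    and q3: "\<exists>n. \<forall>u\<in>principal_units p n. \<mu>2 (0, u) = 1"
    using assms(3) unfolding is_qchar_def by auto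
  have fmult: "f (zp_mult p u v) = f u * f v" if "u \<in> zp_units p" "v \<in> zp_units p" for u v
  proof -
    have "\<mu>2 (qp_mult p (0, u) (0, v)) = \<mu>2 (0, u) * \<mu>2 (0, v)"
      using q2 inq that by blast
    then show ?thesis by (simp add: f_def qp_mult_def)
  qed
  have fnz: "f u \<noteq> 0" if "u \<in> zp_units p" for u
    using q1 inq[OF that] unfolding f_def by blast
  have nu: "\<not> unramified p \<omega>" using assms(8,9) by (auto simp: cond_exp_def \<omega>_def)
  define P where "P = (\<lambda>n::nat. n \<ge> 1 \<and> (\<forall>u\<in>principal_units p n. \<omega> (0, u) = 1))"
  have NL: "N = (LEAST n. P n)" using assms(8) nu by (simp add: cond_exp_def P_def \<omega>_def)
  obtain n2 where n2: "\<forall>u\<in>principal_units p n2. \<mu>2 (0, u) = 1" using q3 by blast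
  have sub: "\<And>m. principal_units p m \<subseteq> zp_units p" by (auto simp: principal_units_def)
  have "P (Suc n2)" unfolding P_def
  proof (intro conjI ballI)
    fix u assume u: "u \<in> principal_units p (Suc n2)"
    have "principal_units p (Suc n2) \<subseteq> principal_units p n2" using pu_mono[OF p1] by simp
    then have "\<mu>2 (0, u) = 1" using n2 u by blast
    moreover have "u \<in> zp_units p" using sub u by blast
    ultimately show "\<omega> (0, u) = 1" using om unfolding f_def by simp
  qed simp
  then have PN: "P N" unfolding NL by (rule LeastI)
  have ftriv: "f u = 1" if "u \<in> principal_units p N" for u
  proof -
    have "\<forall>u\<in>principal_units p N. \<omega> (0, u) = 1" using PN unfolding P_def by blast
    then have "\<omega> (0, u) = 1" using that by blast
    moreover have "u \<in> zp_units p" using sub that by blast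
    ultimately show ?thesis using om by simp
  qed
  have fnontriv: "\<exists>u\<in>principal_units p (N - 1). f u \<noteq> 1"
  proof (cases "N = 1")
    case True
    have "\<not> (\<forall>u\<in>zp_units p. \<omega> (0, u) = 1)" using nu unfolding unramified_def by blast
    then obtain u where u: "u \<in> zp_units p" "\<omega> (0, u) \<noteq> 1" by blast
    then have "f u \<noteq> 1" using om by simp
    moreover have "u \<in> principal_units p (N - 1)" using u True pu_0 by simp
    ultimately show ?thesis by blast
  next
    case False
    have "N - 1 < (LEAST n. P n)" using assms(9) NL by simp
    then have "\<not> P (N - 1)" by (rule not_less_Least)
    moreover have "N - 1 \<ge> 1" using False assms(9) by simp
    ultimately have "\<not> (\<forall>u\<in>principal_units p (N - 1). \<omega> (0, u) = 1)" unfolding P_def by blast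
    then obtain u where u: "u \<in> principal_units p (N - 1)" "\<omega> (0, u) \<noteq> 1" by blast
    moreover have "u \<in> zp_units p" using sub u by blast
    ultimately show ?thesis using om by auto
  qed
  interpret ctx p N f
    by (rule ctx.intro[OF assms(1) fmult fnz ftriv fnontriv assms(9)])
  define \<chi> where "\<chi> = (\<lambda>j::nat. \<lambda>x. \<mu>1 x ^ (3 - j) * \<mu>2 x ^ j)"
  have h\<chi>: "\<forall>u\<in>zp_units p. \<chi> j (0, u) = f u ^ j" for j
    using assms(6) by (simp add: \<chi>_def f_def unramified_def)
  have ordeq: "order_on_units p \<omega> = (LEAST k. k \<ge> 1 \<and> T k 0)"
  proof -
    have "(\<forall>u\<in>zp_units p. \<omega> (0, u) ^ k = 1) \<longleftrightarrow> T k 0" for k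
      using level_iff[of 0 k] om by (simp add: pu_0)
    then show ?thesis unfolding order_on_units_def by simp
  qed
  have s3: "sym3_conductor p \<mu>1 \<mu>2 = (\<Sum>j\<le>3. cond_exp p (\<chi> j))"
    by (simp add: sym3_conductor_def \<chi>_def)
  show ?thesis unfolding s3 ordeq[unfolded \<omega>_def] by (rule main[OF h\<chi>])
qed

end
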